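(* Let $n\ge 2$ be an integer and let $i$ be an odd integer with $3\le i\le 2^n-1$. Then $$v_2\big(s(2^n,i+1)\big)\ge v_2\big(s(2^n,i-1)\big)-2n+4.$$
   Context: The (unsigned) Stirling numbers of the first kind $s(n,k)$ are defined by $x(x+1)\cdots(x+n-1)=\sum_{k=0}^n s(n,k)x^k$. $v_2$ denotes the $2$-adic valuation. *)

theory Defs
  imports "HOL-Combinatorics.Stirling" "HOL-Computational_Algebra.Primes"
begin

end

theory Submission imports Defs "HOL-Computational_Algebra.Polynomial" begin

definition PP :: "nat \<Rightarrow> int poly" where
  "PP N = (\<Prod>j<N. [:int j, 1:])"

lemma coeff_PP: "coeff (PP N) k = int (stirling N k)"
proof -
  define S where "S = (\<Sum>j\<le>N. monom (int (stirling N j)) j)"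
  have "PP N = S"
  proof (rule poly_ext)
    fix x :: int
    have "poly (PP N) x = pochhammer x N"
      by (simp add: PP_def poly_prod pochhammer_prod atLeast0LessThan add.commute)
    also have "\<dots> = (\<Sum>j\<le>N. of_nat (stirling N j) * x ^ j)"
      by (rule stirling_pochhammer[symmetric])
    also have "\<dots> = poly S x" by (simp add: S_def poly_sum poly_monom)
    finally show "poly (PP N) x = poly S x" .
  qed
  moreover have "coeff S k = int (stirling N k)"
    by (cases "k \<le> N") (auto simp: S_def coeff_sum coeff_monom)
  ultimately show ?thesis by simp
qed

lemma PP_add: "PP (N + K) = PP N * (\<Prod>i<K. [:int N + int i, 1:])"
proof (induction K)
  case 0 then show ?case by (simp add: PP_def)
next
  case (Suc K)
  have "PP (N + Suc K) = PP (N + K) * [:int (N + K), 1:]"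
    by (simp only: PP_def add_Suc_right prod.lessThan_Suc)
  also have "\<dots> = PP N * ((\<Prod>i<K. [:int N + int i, 1:]) * [:int N + int K, 1:])"
    by (simp only: Suc.IH mult.assoc of_nat_add)
  also have "\<dots> = PP N * (\<Prod>i<Suc K. [:int N + int i, 1:])"
    by (simp only: prod.lessThan_Suc)
  finally show ?case .
qed

lemma lin_pcompose: "pcompose [:a, 1:] [:b, 1:] = [:b + a, (1::int):]"
  by (simp add: pcompose_pCons)

lemma PP_double_shift: "PP (2*N) = PP N * pcompose (PP N) [:int N, 1:]"
proof -
  have "PP (2*N) = PP (N+N)" by (simp only: mult_2)
  also have "\<dots> = PP N * (\<Prod>i<N. [:int N + int i, 1:])" by (rule PP_add)
  also have "(\<Prod>i<N. [:int N + int i, 1:]) = pcompose (PP N) [:int N, 1:]"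
  proof -
    have h: "\<And>i. pcompose [:int i, 1:] [:int N, 1:] = [:int N + int i, 1:]"
      by (simp add: pcompose_pCons)
    show ?thesis unfolding PP_def pcompose_prod h ..
  qed
  finally show ?thesis .
qed

lemma PP_Suc: "PP (Suc N) = PP N * [:int N, 1:]"
  by (simp only: PP_def prod.lessThan_Suc)

lemma PP_even_odd: "PP (2*N) = (\<Prod>i<N. [:2 * int i, 1:]) * (\<Prod>i<N. [:2 * int i + 1, 1:])"
proof (induction N)
  case 0 then show ?case by (simp add: PP_def)
next
  case (Suc N)
  have e: "2 * Suc N = Suc (Suc (2*N))" by simp
  have e1: "int (2*N) = 2 * int N" by simp
  have e2: "int (Suc (2*N)) = 2 * int N + 1" by simp
  have "PP (2 * Suc N) = PP (2*N) * [:int (2*N), 1:] * [:int (Suc (2*N)), 1:]"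
    by (simp only: e PP_Suc)
  also have "\<dots> = ((\<Prod>i<N. [:2 * int i, 1:]) * [:2 * int N, 1:]) * ((\<Prod>i<N. [:2 * int i + 1, 1:]) * [:2 * int N + 1, 1:])"
    by (simp only: Suc.IH e1 e2 mult.assoc mult.left_commute)
  finally show ?case by (simp only: prod.lessThan_Suc)
qed

lemma PP4: "PP 4 = [:0,-1,1:]^2 + smult 2 [:0,3,5,4:]"
proof -
  have e: "(4::nat) = Suc (Suc (Suc (Suc 0)))" by simp
  have "PP 4 = [:0,1:] * [:1,1:] * [:2,1:] * [:3,1:]"
    by (simp only: e PP_Suc) (simp add: PP_def)
  then show ?thesis by (simp add: power2_eq_square)
qed

definition W :: "nat \<Rightarrow> int poly" where "W m = [:0,-1,1:]^(2^m)"

definition rep :: "nat \<Rightarrow> int poly \<Rightarrow> bool" where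
  "rep m Q \<longleftrightarrow> (\<exists>a u R. odd (u::int) \<and> Q = smult (2^a) (smult u (W m) + smult (2^m) R))"

lemma odd_prod: "\<exists>c S. odd c \<and> (\<Prod>i<N. [:2 * int i + 1, 2*L:]) = [:c:] + smult 2 S"
proof (induction N)
  case 0 show ?case by (rule exI[of _ 1], rule exI[of _ 0]) simp
next
  case (Suc N)
  then obtain c S where cS: "odd c" "(\<Prod>i<N. [:2 * int i + 1, 2*L:]) = [:c:] + smult 2 S" by blast
  define d where "d = 2 * int N + 1"
  have "(\<Prod>i<Suc N. [:2 * int i + 1, 2*L:]) = ([:c:] + smult 2 S) * [:d, 2*L:]"
    by (simp add: cS(2) d_def)
  also have "[:d, 2*L:] = [:d:] + smult 2 [:0, L:]" by simp
  also have "([:c:] + smult 2 S) * ([:d:] + smult 2 [:0, L:]) = [:c*d:] + smult 2 (smult c [:0,L:] + S * [:d, 2*L:])"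
    by (simp add: algebra_simps smult_add_right)
  finally show ?case using cS(1) by (intro exI[of _ "c*d"] exI) (simp add: d_def)
qed

lemma alg1:
  fixes W R S :: "int poly"
  shows "smult x (smult y (smult u W + smult 2 R)) * ([:c:] + smult 2 S) =
     smult (x*y) (smult (u*c) W + smult 2 (smult c R + smult u (W*S) + smult 2 (R*S)))"
  by (simp add: algebra_simps smult_add_right)

lemma base_step:
  "pcompose (PP (2*N)) [:0, 2*L:] = smult (2^N) (pcompose (PP N) [:0,L:]) * (\<Prod>i<N. [:2 * int i + 1, 2*L:])"
proof -
  have h1: "\<And>i. pcompose [:2*int i, 1:] [:0, 2*L:] = smult 2 (pcompose [:int i, 1:] [:0,L:])"
    by (simp add: pcompose_pCons)
  have h2: "\<And>i. pcompose [:2*int i + 1, 1:] [:0, 2*L:] = [:2*int i + 1, 2*L:]"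
    by (simp add: pcompose_pCons)
  show ?thesis
    unfolding PP_even_odd pcompose_mult pcompose_prod h1 h2 prod_smult
    by (simp add: PP_def pcompose_prod)
qed

lemma base: "rep 1 (pcompose (PP (2^(e+2))) [:0, 2^e:])"
proof (induction e)
  case 0
  show ?case unfolding rep_def W_def
    by (rule exI[of _ 0], rule exI[of _ 1], rule exI[of _ "[:0,3,5,4:]"]) (simp add: PP4)
next
  case (Suc e)
  then obtain a u R where h: "odd u" "pcompose (PP (2^(e+2))) [:0, 2^e:] = smult (2^a) (smult u (W 1) + smult (2^1) R)"
    unfolding rep_def by blast
  obtain c S where cS: "odd c" "(\<Prod>i<2^(e+2). [:2 * int i + 1, 2*2^e:]) = [:c:] + smult 2 S"
    using odd_prod by blast
  have "pcompose (PP (2^(Suc e+2))) [:0, 2^Suc e:] = pcompose (PP (2*2^(e+2))) [:0, 2*2^e:]"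
    by simp
  also have "\<dots> = smult (2^(2^(e+2))) (smult (2^a) (smult u (W 1) + smult 2 R)) * ([:c:] + smult 2 S)"
    unfolding base_step h(2) cS(2) by simp
  also have "\<dots> = smult (2^(2^(e+2)) * 2^a) (smult (u*c) (W 1) + smult (2^1) (smult c R + smult u (W 1*S) + smult 2 (R*S)))"
    unfolding alg1 by simp
  also have "(2::int)^(2^(e+2)) * 2^a = 2^(2^(e+2) + a)" by (simp add: power_add)
  finally show ?case unfolding rep_def using h(1) cS(1)
    by (intro exI[of _ "2^(2^(e+2)) + a"] exI[of _ "u*c"] exI) auto
qed

lemma shift_diff: "\<exists>T. pcompose p [:M, 1:] = p + smult M (T :: int poly)"
proof (induction p)
  case 0 show ?case by (rule exI[of _ 0]) simp
next
  case (pCons a p)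
  then obtain T where T: "pcompose p [:M, 1:] = p + smult M T" by blast
  have "pcompose (pCons a p) [:M, 1:] = pCons a p + smult M (p + smult M T + pCons 0 T)"
    by (simp add: pcompose_pCons T algebra_simps smult_add_right)
  then show ?case by blast
qed

lemma power_shift: "\<exists>C. (A + smult M B)^k = A^k + smult M (C :: int poly)"
proof (induction k)
  case 0 show ?case by (rule exI[of _ 0]) simp
next
  case (Suc k)
  then obtain C where C: "(A + smult M B)^k = A^k + smult M C" by blast
  have "(A + smult M B)^Suc k = A^Suc k + smult M (B * A^k + A * C + smult M (B * C))"
    by (simp add: C algebra_simps smult_add_right)
  then show ?case by blast
qed

lemma pcompose_power': "pcompose (p ^ k) q = (pcompose p q) ^ k"
  by (induction k) (simp_all add: pcompose_mult pcompose_1)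

lemma W_shift: "\<exists>T. pcompose (W m) [:M, 1:] = W m + smult M T"
proof -
  have "pcompose [:0,-1,1:] [:M,1:] = [:0,-1,1:] + smult M [:M - 1, 2:]"
    by (simp add: pcompose_pCons algebra_simps)
  then show ?thesis unfolding W_def pcompose_power' using power_shift by metis
qed

lemma mult2: "(p::int poly) * 2 = smult 2 p"
proof -
  have "smult 2 p = p + p" by (metis one_add_one smult_1_left smult_add_left)
  then show ?thesis by (simp add: mult_2_right)
qed

lemma alg2:
  fixes W R T T2 :: "int poly"
  shows "(smult u W + smult (2*t) R) * (smult u (W + smult (4*t) T) + smult (2*t) (R + smult (4*t) T2)) =
    smult (u*u) (W*W) + smult (4*t) (smult (u*u) (W*T) + smult u (W*R) + smult (2*t*u) (W*T2)
      + smult (2*t*u) (R*T) + smult t (R*R) + smult (4*t*t) (R*T2))"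
  by (simp add: algebra_simps smult_add_right) (simp add: mult2 mult_ac)

lemma W_Suc: "W (Suc m) = W m * W m"
  unfolding W_def by (simp only: power_Suc mult_2 power_add)

lemma step:
  assumes "rep (Suc k) Q"
  shows "rep (Suc (Suc k)) (Q * pcompose Q [:2^(k+2), 1:])"
proof -
  define t :: int where "t = 2^k"
  define M :: int where "M = 2^(k+2)"
  have M4: "M = 4*t" unfolding M_def t_def by (simp add: power_add)
  obtain a u R where h: "odd u" "Q = smult (2^a) (smult u (W (Suc k)) + smult (2^Suc k) R)"
    using assms unfolding rep_def by blast
  have h2: "Q = smult (2^a) (smult u (W (Suc k)) + smult (2*t) R)"
    using h(2) by (simp add: t_def)
  obtain T where T: "pcompose (W (Suc k)) [:M, 1:] = W (Suc k) + smult M T" using W_shift by blast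
  obtain T2 where T2: "pcompose R [:M, 1:] = R + smult M T2" using shift_diff by blast
  have "pcompose Q [:M,1:] = smult (2^a) (smult u (W (Suc k) + smult (4*t) T) + smult (2*t) (R + smult (4*t) T2))"
    unfolding h2 by (simp add: pcompose_smult pcompose_add T[unfolded M4] T2[unfolded M4] M4)
  then have "Q * pcompose Q [:M,1:] = smult (2^a * 2^a) ((smult u (W (Suc k)) + smult (2*t) R) *
       (smult u (W (Suc k) + smult (4*t) T) + smult (2*t) (R + smult (4*t) T2)))"
    unfolding h2 by simp
  also have "\<dots> = smult (2^(a+a)) (smult (u*u) (W (Suc (Suc k))) + smult (2^Suc (Suc k)) 
        (smult (u*u) (W (Suc k)*T) + smult u (W (Suc k)*R) + smult (2*t*u) (W (Suc k)*T2)
      + smult (2*t*u) (R*T) + smult t (R*R) + smult (4*t*t) (R*T2)))"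
    unfolding alg2 W_Suc[of "Suc k"] by (simp add: t_def power_add)
  finally show ?thesis unfolding rep_def M_def using h(1)
    by (intro exI[of _ "a+a"] exI[of _ "u*u"] exI) auto
qed

lemma core_Suc: "rep (Suc k) (pcompose (PP (2^(e+k+2))) [:0, 2^e:])"
proof (induction k)
  case 0 show ?case using base[of e] by simp
next
  case (Suc k)
  define N where "N = (2::nat)^(e+k+2)"
  define L :: int where "L = 2^e"
  define M :: int where "M = 2^(k+2)"
  have NLM: "int N = L * M" unfolding N_def L_def M_def by (simp add: power_add)
  have "PP (2^(e + Suc k + 2)) = PP (2*N)" unfolding N_def by simp
  also have "\<dots> = PP N * pcompose (PP N) [:int N, 1:]" by (rule PP_double_shift)
  finally have "pcompose (PP (2^(e + Suc k + 2))) [:0, L:] =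
      pcompose (PP N) [:0, L:] * pcompose (pcompose (PP N) [:int N, 1:]) [:0, L:]"
    by (simp add: pcompose_mult)
  also have "pcompose (pcompose (PP N) [:int N, 1:]) [:0, L:] = pcompose (pcompose (PP N) [:0, L:]) [:M, 1:]"
    unfolding pcompose_assoc[symmetric] by (simp add: pcompose_pCons NLM mult.commute)
  finally have eq: "pcompose (PP (2^(e + Suc k + 2))) [:0, L:] =
      pcompose (PP N) [:0, L:] * pcompose (pcompose (PP N) [:0, L:]) [:2^(k+2), 1:]"
    by (simp add: M_def)
  show ?case unfolding eq[unfolded L_def] using step[OF Suc.IH[folded N_def]] by (simp add: N_def)
qed

lemma binom_even: "0 < c \<Longrightarrow> c < 2^m \<Longrightarrow> even ((2::nat)^m choose c)"
proof (rule ccontr)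
  assume c: "0 < c" "c < 2^m" and o: "odd ((2::nat)^m choose c)"
  have "c * (2^m choose c) = 2^m * ((2^m - 1) choose (c - 1))"
    using times_binomial_minus1_eq[OF c(1)] by simp
  then have "(2::nat)^m dvd c * (2^m choose c)" by simp
  moreover have "coprime ((2::nat)^m) (2^m choose c)" using o by simp
  ultimately have "(2::nat)^m dvd c" using coprime_dvd_mult_left_iff by blast
  then show False using c by (simp add: nat_dvd_not_less)
qed

lemma binom_odd: "c < 2^m \<Longrightarrow> odd ((2::nat)^m - 1 choose c)"
proof (induction c)
  case 0 show ?case by simp
next
  case (Suc c)
  have N: "(2::nat)^m = Suc (2^m - 1)" by simp
  have "(2::nat)^m choose Suc c = (2^m - 1 choose c) + (2^m - 1 choose Suc c)"
    by (subst N) (rule binomial_Suc_Suc)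
  moreover have "even ((2::nat)^m choose Suc c)" using binom_even Suc.prems by blast
  moreover have "odd (2^m - 1 choose c)" using Suc by simp
  ultimately show ?case by auto
qed

lemma binom_not_dvd: "0 < m \<Longrightarrow> even b \<Longrightarrow> b < 2^m \<Longrightarrow> \<not> (2::int)^m dvd int ((2^m) choose b)"
proof
  assume m: "0 < m" and b: "even b" "b < 2^m" and d: "(2::int)^m dvd int ((2^m) choose b)"
  show False
  proof (cases "b = 0")
    case True
    then show False using d m by simp
  next
    case False
    have d': "(2::nat)^m dvd (2^m choose b)" using d by (metis int_dvd_int_iff of_nat_numeral of_nat_power)
    have "b * (2^m choose b) = 2^m * ((2^m - 1) choose (b - 1))"
      using times_binomial_minus1_eq[of b] False by simp
    moreover have "(2::nat)^(Suc m) dvd b * (2^m choose b)"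
      using d' b(1) by (simp add: mult_dvd_mono)
    ultimately have "(2::nat) * 2^m dvd 2^m * ((2^m - 1) choose (b - 1))" by simp
    then have "2 dvd ((2::nat)^m - 1 choose (b - 1))" by (simp add: mult.commute)
    moreover have "b - 1 < 2^m" using b by linarith
    ultimately show False using binom_odd[of "b-1" m] by simp
  qed
qed

lemma stirling_pos: "0 < k \<Longrightarrow> k \<le> n \<Longrightarrow> stirling n k > 0"
proof (induction n arbitrary: k)
  case 0 then show ?case by simp
next
  case (Suc n)
  then obtain k' where k': "k = Suc k'" by (cases k) auto
  show ?case
  proof (cases "k' = 0")
    case True then show ?thesis unfolding k' True stirling_Suc_n_1 by simp
  next
    case False
    then have "stirling n k' > 0" using Suc k' by simp
    then show ?thesis using k' by simp
  qed
qed

lemma coeff_W: "b \<le> 2^m \<Longrightarrow> coeff (W m) (2^m + b) = int (2^m choose b) * (-1)^(2^m - b)"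
proof -
  assume b: "b \<le> 2^m"
  have "[:0,-1,1:] = [:0,1::int:] * [:-1,1:]" by simp
  then have "W m = [:0,1:]^(2^m) * [:-1,1:]^(2^m)"
    unfolding W_def by (simp only: power_mult_distrib)
  also have "[:0,1::int:]^(2^m) = monom 1 (2^m)" by (simp add: monom_altdef)
  finally have "W m = monom 1 (2^m) * [:-1,1:]^(2^m)" .
  then have "coeff (W m) (2^m + b) = coeff ([:-1,1:]^(2^m)) b" by (simp add: coeff_monom_mult)
  also have "\<dots> = int (2^m choose b) * (-1)^(2^m - b)"
    using coeff_linear_poly_power[OF b, of "-1::int" 1] by simp
  finally show ?thesis .
qed

theorem mainTheorem10:
  fixes n i :: nat
  assumes "n \<ge> 2" and "odd i" and "3 \<le> i" and "i \<le> 2 ^ n - 1"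
  shows "int (multiplicity (2::nat) (stirling (2 ^ n) (i + 1)))
           \<ge> int (multiplicity (2::nat) (stirling (2 ^ n) (i - 1))) - 2 * int n + 4"
proof -
  define k where "k = i - 1"
  have pn: "(1::nat) \<le> 2^n" by simp
  have k2: "2 \<le> k" "even k" "i + 1 = k + 2" "i - 1 = k" "k + 2 \<le> 2^n"
    using assms pn unfolding k_def by auto
  obtain m where m: "2^m \<le> k" "k < 2^(m+1)" using ex_power_ivl1[of 2 k] k2 by auto
  have m1: "1 \<le> m"
  proof (rule ccontr)
    assume "\<not> 1 \<le> m" then have "m = 0" by simp
    then show False using m k2 by simp
  qed
  have mn: "m < n"
  proof -
    have "(2::nat)^m < 2^n" using m k2 by linarith
    then show ?thesis by (simp add: power_less_imp_less_exp)
  qed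
  obtain m' where m': "m = Suc m'" using m1 by (cases m) auto
  define e where "e = n - m - 1"
  have ne: "n = e + m' + 2" using mn m' unfolding e_def by simp
  define N where "N = (2::nat)^n"
  have "rep (Suc m') (pcompose (PP N) [:0, 2^e:])" using core_Suc[of m' e] unfolding N_def ne .
  then obtain a u R where h: "odd u" "pcompose (PP N) [:0,2^e:] = smult (2^a) (smult u (W m) + smult (2^m) R)"
    unfolding rep_def m' by blast
  have cf: "\<And>j. 2^(e*j) * int (stirling N j) = 2^a * (u * coeff (W m) j + 2^m * coeff R j)"
  proof -
    fix j
    have "coeff (pcompose (PP N) [:0,2^e:]) j = coeff (smult (2^a) (smult u (W m) + smult (2^m) R)) j"
      using h(2) by simp
    then show "2^(e*j) * int (stirling N j) = 2^a * (u * coeff (W m) j + 2^m * coeff R j)"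
      by (simp add: coeff_pcompose_linear coeff_PP power_mult)
  qed
  define b where "b = k - 2^m"
  have b: "k = 2^m + b" "even b" "b < 2^m" using m k2 m1 unfolding b_def by (auto simp: m')
  have cW: "\<not> (2::int)^m dvd coeff (W m) k"
  proof
    assume d: "(2::int)^m dvd coeff (W m) k"
    define t where "t = 2^m - b"
    have "coeff (W m) k = int (2^m choose b) * (-1)^t" unfolding b(1) t_def using b by (intro coeff_W) simp
    with d have "(2::int)^m dvd int (2^m choose b) * (-1)^t * (-1)^t" by simp
    moreover have "(-1::int)^t * (-1)^t = ((-1)*(-1))^t" by (simp add: power_mult_distrib)
    ultimately have "(2::int)^m dvd int (2^m choose b)" by (simp add: mult.assoc)
    then show False using binom_not_dvd[of m b] b m1 by simp
  qed
  define V where "V = multiplicity (2::nat) (stirling N k)"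
  define V2 where "V2 = multiplicity (2::nat) (stirling N (k+2))"
  have sk: "stirling N k \<noteq> 0" using stirling_pos[of k N] k2 unfolding N_def by simp
  have sk2: "stirling N (k+2) \<noteq> 0" using stirling_pos[of "k+2" N] k2 unfolding N_def by simp
  have up: "V + e*k < a + m"
  proof (rule ccontr)
    assume "\<not> V + e*k < a + m"
    then have le: "a + m \<le> V + e*k" by simp
    have "(2::nat)^V dvd stirling N k" unfolding V_def by (rule multiplicity_dvd)
    then have "(2::int)^V dvd int (stirling N k)" by (metis int_dvd_int_iff of_nat_numeral of_nat_power)
    then have "(2::int)^(e*k) * 2^V dvd 2^(e*k) * int (stirling N k)" by (rule mult_dvd_mono[OF dvd_refl])
    then have "(2::int)^(V + e*k) dvd 2^(e*k) * int (stirling N k)"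
      by (simp only: power_add mult.commute)
    then have "(2::int)^(V + e*k) dvd 2^a * (u * coeff (W m) k + 2^m * coeff R k)"
      by (simp only: cf)
    then have "(2::int)^(a + m) dvd 2^a * (u * coeff (W m) k + 2^m * coeff R k)"
      using le by (meson dvd_trans le_imp_power_dvd)
    then have "(2::int)^a * 2^m dvd 2^a * (u * coeff (W m) k + 2^m * coeff R k)" by (simp add: power_add)
    then have "(2::int)^m dvd u * coeff (W m) k + 2^m * coeff R k" by simp
    then have "(2::int)^m dvd u * coeff (W m) k" by (simp add: dvd_add_left_iff)
    moreover have "coprime ((2::int)^m) u" using h(1) by simp
    ultimately have "(2::int)^m dvd coeff (W m) k" using coprime_dvd_mult_right_iff by blast
    then show False using cW by simp
  qed
  have lo: "a \<le> V2 + e*(k+2)"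
  proof (rule ccontr)
    assume "\<not> a \<le> V2 + e*(k+2)"
    then have le: "Suc V2 + e*(k+2) \<le> a" by simp
    have "(2::int)^a dvd 2^(e*(k+2)) * int (stirling N (k+2))" unfolding cf by (rule dvd_triv_left)
    then have "(2::int)^(e*(k+2)) * 2^(Suc V2) dvd 2^(e*(k+2)) * int (stirling N (k+2))"
      using le by (metis dvd_trans le_imp_power_dvd power_add add.commute)
    then have "(2::int)^(Suc V2) dvd int (stirling N (k+2))" by simp
    then have "(2::nat)^(Suc V2) dvd stirling N (k+2)" by (metis int_dvd_int_iff of_nat_numeral of_nat_power)
    moreover have nu: "\<not> is_unit (2::nat)" by simp
    ultimately have "Suc V2 \<le> V2" unfolding V2_def using power_dvd_iff_le_multiplicity[OF sk2 nu] by blast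
    then show False by simp
  qed
  have ek: "e*(k+2) = e*k + 2*e" by (simp add: algebra_simps)
  have "V + 4 \<le> V2 + 2*n" using up lo ek ne m' by linarith
  then show ?thesis unfolding k2(3) k2(4) V_def V2_def N_def by linarith
qed

end
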